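(* Let $(T,\sigma)$ be a confluent temperature-1 TAS with maximal producible assembly $\alpha_{\max}$, and let $x\in\mathrm{Dom}(\alpha_{\max})$. Let $p$ be a finite free path such that there is an assembly (not necessarily producible) whose binding graph contains the path $x.p$ and which places the tile $\alpha_{\max}(x)$ at $x$. If $\mathrm{Dom}(x.p)\subseteq \mathrm{NC}(x)$, then the path $x.p$ is a subgraph of the binding graph of $\alpha_{\max}$.
   Context: Directions $D=\{E=(1,0),N=(0,1),S=(0,-1),W=(-1,0)\}$; $\mathbb Z^2$ is the grid graph; a free path is a word over $D$ whose associated walk is simple; $A.m$ is the path starting at $A$ following $m$; $\vec m$ is the displacement (sum of letters) of finite $m$. A tile type is a map $t:D\to\Sigma$ ($\Sigma$ a finite glue set), $t_d$ its glue on side $d$. A temperature-1 TAS is $(T,\sigma)$, $T$ finite set of tile types, $\sigma$ the seed tile type. An assembly is a partial map $\alpha:\mathbb Z^2\to T\cup\{\sigma\}$; its binding graph has vertices $\mathrm{Dom}(\alpha)$ and an edge $\{v,v+d\}$ iff $\alpha(v)_d=\alpha(v+d)_{-d}$; it is stable if the binding graph is connected, producible if stable and $\alpha((0,0))=\sigma$. The TAS is confluent if any two producible assemblies agree on their common domain; then there is a unique producible assembly $\alpha_{\max}$ whose domain contains the domain of every producible assembly. Non-causal set: for $x\in\mathbb Z^2$, $\mathrm{NC}(x)=\{y\in\mathbb Z^2: \exists$ a finite free path $m$ with $(0,0).m$ a subgraph of the binding graph of $\alpha_{\max}$, $(0,0)+\vec m=x$ and $y\notin \mathrm{Dom}((0,0).m)\}\cup\{x\}$.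 *)

theory Defs
  imports Main
begin

datatype dir = E | N | S | W

fun vec :: "dir \<Rightarrow> int \<times> int" where
  "vec E = (1, 0)" | "vec N = (0, 1)" | "vec S = (0, -1)" | "vec W = (-1, 0)"

fun opp :: "dir \<Rightarrow> dir" where
  "opp E = W" | "opp W = E" | "opp N = S" | "opp S = N"

definition padd :: "int \<times> int \<Rightarrow> int \<times> int \<Rightarrow> int \<times> int" where
  "padd u v = (fst u + fst v, snd u + snd v)"

definition disp :: "dir list \<Rightarrow> int \<times> int" where
  "disp m = foldr (\<lambda>d v. padd (vec d) v) m (0, 0)"

text \<open>The vertices of the walk A.m, in order: A, A + m_1, A + m_1 + m_2, ...\<close>
definition positions :: "int \<times> int \<Rightarrow> dir list \<Rightarrow> (int \<times> int) list" where
  "positions A m = map (\<lambda>i. padd A (disp (take i m))) [0..<Suc (length m)]"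

definition free_path :: "dir list \<Rightarrow> bool" where
  "free_path m \<longleftrightarrow> distinct (positions (0, 0) m)"

text \<open>Tile types (glue on each side) and assemblies (partial maps).\<close>
type_synonym 'g tile = "dir \<Rightarrow> 'g"
type_synonym 'g assembly = "int \<times> int \<Rightarrow> 'g tile option"

definition binds :: "'g assembly \<Rightarrow> int \<times> int \<Rightarrow> dir \<Rightarrow> bool" where
  "binds \<alpha> v d \<longleftrightarrow> (\<exists>a b. \<alpha> v = Some a \<and> \<alpha> (padd v (vec d)) = Some b \<and> a d = b (opp d))"

definition bind_rel :: "'g assembly \<Rightarrow> ((int \<times> int) \<times> (int \<times> int)) set" where
  "bind_rel \<alpha> = {(v, padd v (vec d)) | v d. binds \<alpha> v d}"

definition path_in :: "'g assembly \<Rightarrow> int \<times> int \<Rightarrow> dir list \<Rightarrow> bool" where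
  "path_in \<alpha> A m \<longleftrightarrow> set (positions A m) \<subseteq> dom \<alpha> \<and>
     (\<forall>i < length m. binds \<alpha> (positions A m ! i) (m ! i))"

definition is_assembly :: "'g tile set \<Rightarrow> 'g tile \<Rightarrow> 'g assembly \<Rightarrow> bool" where
  "is_assembly T \<sigma> \<alpha> \<longleftrightarrow> ran \<alpha> \<subseteq> insert \<sigma> T"

definition stable :: "'g assembly \<Rightarrow> bool" where
  "stable \<alpha> \<longleftrightarrow> (\<forall>u \<in> dom \<alpha>. \<forall>v \<in> dom \<alpha>. (u, v) \<in> (bind_rel \<alpha>)\<^sup>*)"

definition producible :: "'g tile set \<Rightarrow> 'g tile \<Rightarrow> 'g assembly \<Rightarrow> bool" where
  "producible T \<sigma> \<alpha> \<longleftrightarrow> is_assembly T \<sigma> \<alpha> \<and> stable \<alpha> \<and> \<alpha> (0, 0) = Some \<sigma>"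

definition confluent :: "'g tile set \<Rightarrow> 'g tile \<Rightarrow> bool" where
  "confluent T \<sigma> \<longleftrightarrow> (\<forall>\<alpha> \<beta>. producible T \<sigma> \<alpha> \<and> producible T \<sigma> \<beta> \<longrightarrow>
      (\<forall>v \<in> dom \<alpha> \<inter> dom \<beta>. \<alpha> v = \<beta> v))"

definition is_max_producible :: "'g tile set \<Rightarrow> 'g tile \<Rightarrow> 'g assembly \<Rightarrow> bool" where
  "is_max_producible T \<sigma> \<alpha> \<longleftrightarrow> producible T \<sigma> \<alpha> \<and>
     (\<forall>\<beta>. producible T \<sigma> \<beta> \<longrightarrow> dom \<beta> \<subseteq> dom \<alpha>)"

definition NC :: "'g assembly \<Rightarrow> int \<times> int \<Rightarrow> (int \<times> int) set" where
  "NC \<alpha>max x = {y. \<exists>m. free_path m \<and> path_in \<alpha>max (0, 0) m \<and> padd (0, 0) (disp m) = x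
       \<and> y \<notin> set (positions (0, 0) m)} \<union> {x}"

end

theory Submission
  imports Defs
begin

lemma padd_0[simp]: "padd (0,0) v = v" by (simp add: padd_def)

lemma disp_append: "disp (xs@ys) = padd (disp xs) (disp ys)"
  by (induction xs) (auto simp: disp_def padd_def)

lemma disp_snoc_take: "i < length m \<Longrightarrow> disp (take (Suc i) m) = padd (disp (take i m)) (vec (m!i))"
  by (simp add: take_Suc_conv_app_nth disp_append) (simp add: disp_def padd_def)

lemma pos_len[simp]: "length (positions A m) = Suc (length m)" by (simp add: positions_def)

lemma pos_nth: "j \<le> length m \<Longrightarrow> positions A m ! j = padd A (disp (take j m))"
  by (simp add: positions_def nth_map less_Suc_eq_le del: upt_Suc)

lemma pos_Suc: "i < length m \<Longrightarrow> positions A m ! Suc i = padd (positions A m ! i) (vec (m!i))"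
  by (simp add: pos_nth disp_snoc_take) (simp add: padd_def)

lemma pos_0: "positions A m ! 0 = A" by (simp add: pos_nth disp_def padd_def)

lemma pos_last: "positions A m ! length m = padd A (disp m)" by (simp add: pos_nth)

lemma set_pos: "set (positions A m) = {positions A m ! j | j. j \<le> length m}"
  by (auto simp: set_conv_nth less_Suc_eq_le)

lemma distinct_pos: "free_path p \<Longrightarrow> distinct (positions x p)"
proof -
  assume "free_path p"
  have "positions x p = map (padd x) (positions (0,0) p)"
    by (simp add: positions_def padd_def)
  moreover have "inj (padd x)" by (auto simp: inj_on_def padd_def)
  ultimately show ?thesis using \<open>free_path p\<close>
    by (simp add: free_path_def distinct_map inj_on_subset[of _ UNIV])
qed

lemma binds_cong: "\<delta> v = \<alpha> v \<Longrightarrow> \<delta> (padd v (vec d)) = \<alpha> (padd v (vec d)) \<Longrightarrow> binds \<alpha> v d \<Longrightarrow> binds \<delta> v d"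
  by (simp add: binds_def)

lemma binds_sym: "binds \<alpha> v d \<Longrightarrow> binds \<alpha> (padd v (vec d)) (opp d)"
proof -
  have 1: "padd (padd v (vec d)) (vec (opp d)) = v" by (cases d) (auto simp: padd_def)
  have 2: "opp (opp d) = d" by (cases d) auto
  show "binds \<alpha> v d \<Longrightarrow> binds \<alpha> (padd v (vec d)) (opp d)"
    unfolding binds_def 1 2 by auto
qed

lemma sym_bind_rel: "sym (bind_rel \<alpha>)"
proof (rule symI)
  fix a b assume "(a, b) \<in> bind_rel \<alpha>"
  then obtain v d where ab: "a = v" "b = padd v (vec d)" "binds \<alpha> v d" by (auto simp: bind_rel_def)
  have 1: "padd (padd v (vec d)) (vec (opp d)) = v" by (cases d) (auto simp: padd_def)
  have "binds \<alpha> b (opp d)" using ab binds_sym by metis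
  then have "(b, padd b (vec (opp d))) \<in> bind_rel \<alpha>" unfolding bind_rel_def by blast
  then show "(b, a) \<in> bind_rel \<alpha>" using ab 1 by simp
qed

lemma path_reach:
  assumes "\<forall>i<j. binds \<delta> (positions A m ! i) (m ! i)" "j \<le> length m"
  shows "(A, positions A m ! j) \<in> (bind_rel \<delta>)\<^sup>*"
  using assms
proof (induction j)
  case 0 then show ?case by (simp add: pos_0)
next
  case (Suc j)
  then have "(A, positions A m ! j) \<in> (bind_rel \<delta>)\<^sup>*" by auto
  moreover have "(positions A m ! j, positions A m ! Suc j) \<in> bind_rel \<delta>"
  proof -
    have jl: "j < length m" using Suc.prems by auto
    have "binds \<delta> (positions A m ! j) (m ! j)" using Suc.prems by auto
    then have "(positions A m ! j, padd (positions A m ! j) (vec (m ! j))) \<in> bind_rel \<delta>"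
      unfolding bind_rel_def by blast
    then show ?thesis using pos_Suc[OF jl] by simp
  qed
  ultimately show ?case by (rule rtrancl_into_rtrancl)
qed


theorem mainTheorem3:
  fixes T :: "('g::finite) tile set" and \<sigma> :: "'g tile"
    and \<alpha>max :: "'g assembly" and x :: "int \<times> int" and p :: "dir list"
  assumes "finite T"
    and "confluent T \<sigma>"
    and "is_max_producible T \<sigma> \<alpha>max"
    and "x \<in> dom \<alpha>max"
    and "free_path p"
    and "\<exists>\<beta>. is_assembly T \<sigma> \<beta> \<and> path_in \<beta> x p \<and> \<beta> x = \<alpha>max x"
    and "set (positions x p) \<subseteq> NC \<alpha>max x"
  shows "path_in \<alpha>max x p"
proof -
  obtain \<beta> where asmb: "is_assembly T \<sigma> \<beta>" and pb: "path_in \<beta> x p" and bx: "\<beta> x = \<alpha>max x"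
    using assms(6) by blast
  define y where "y = (\<lambda>j. positions x p ! j)"
  have dist: "distinct (positions x p)" using assms(5) by (rule distinct_pos)
  have yinj: "\<And>i j. i \<le> length p \<Longrightarrow> j \<le> length p \<Longrightarrow> y i = y j \<Longrightarrow> i = j"
    using dist unfolding y_def by (simp add: nth_eq_iff_index_eq less_Suc_eq_le)
  have ySuc: "\<And>i. i < length p \<Longrightarrow> y (Suc i) = padd (y i) (vec (p!i))"
    unfolding y_def by (rule pos_Suc)
  have y0: "y 0 = x" unfolding y_def by (rule pos_0)
  have yset: "\<And>j. j \<le> length p \<Longrightarrow> y j \<in> set (positions x p)"
    unfolding y_def by (auto simp: less_Suc_eq_le)
  have ybdom: "\<And>j. j \<le> length p \<Longrightarrow> y j \<in> dom \<beta>"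
    using pb yset unfolding path_in_def by blast
  have bbind: "\<And>i. i < length p \<Longrightarrow> binds \<beta> (y i) (p ! i)"
    using pb unfolding path_in_def y_def by blast
  have prodmax: "producible T \<sigma> \<alpha>max" and maxdom: "\<And>\<gamma>. producible T \<sigma> \<gamma> \<Longrightarrow> dom \<gamma> \<subseteq> dom \<alpha>max"
    using assms(3) unfolding is_max_producible_def by auto
  have a00: "\<alpha>max (0,0) = Some \<sigma>" using prodmax unfolding producible_def by auto
  have ranmax: "ran \<alpha>max \<subseteq> insert \<sigma> T" using prodmax unfolding producible_def is_assembly_def by auto
  have ranb: "ran \<beta> \<subseteq> insert \<sigma> T" using asmb unfolding is_assembly_def by auto
  have agree: "\<forall>j \<le> k. \<alpha>max (y j) = \<beta> (y j)" if "k \<le> length p" for k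
    using that
  proof (induction k)
    case 0 then show ?case using y0 bx by simp
  next
    case (Suc k)
    then have IH: "\<forall>j \<le> k. \<alpha>max (y j) = \<beta> (y j)" and kl: "k < length p" by auto
    let ?y = "y (Suc k)"
    have "?y \<in> NC \<alpha>max x" using assms(7) yset[of "Suc k"] kl by auto
    moreover have "?y \<noteq> x" using yinj[of "Suc k" 0] kl y0 by auto
    ultimately obtain m where pm: "path_in \<alpha>max (0,0) m" and dm: "disp m = x"
        and ynot: "?y \<notin> set (positions (0,0) m)"
      unfolding NC_def by auto
    define P where "P = set (positions (0,0) m) \<union> {y j | j. j \<le> k}"
    define \<gamma> where "\<gamma> = (\<lambda>v. if v \<in> P then \<alpha>max v else if v = ?y then \<beta> v else None)"
    have yP: "?y \<notin> P"
    proof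
      assume "?y \<in> P"
      then obtain j where j: "j \<le> k" "?y = y j" using ynot unfolding P_def by auto
      then have "Suc k = j" using yinj[of "Suc k" j] kl by auto
      then show False using j by simp
    qed
    have mdom: "set (positions (0,0) m) \<subseteq> dom \<alpha>max" using pm unfolding path_in_def by auto
    have Pdom: "P \<subseteq> dom \<alpha>max"
    proof
      fix v assume "v \<in> P"
      then show "v \<in> dom \<alpha>max"
      proof (cases "v \<in> set (positions (0,0) m)")
        case True then show ?thesis using mdom by auto
      next
        case False
        then obtain j where "j \<le> k" "v = y j" using \<open>v \<in> P\<close> unfolding P_def by auto
        then show ?thesis using IH ybdom[of j] kl by auto
      qed
    qed
    have gP: "\<And>v. v \<in> P \<Longrightarrow> \<gamma> v = \<alpha>max v" unfolding \<gamma>_def by auto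
    have gy: "\<gamma> ?y = \<beta> ?y" unfolding \<gamma>_def using yP by auto
    have domg: "dom \<gamma> = P \<union> {?y}"
      using Pdom ybdom[of "Suc k"] kl unfolding \<gamma>_def by (auto split: if_splits)
    have gyj: "\<And>j. j \<le> Suc k \<Longrightarrow> \<gamma> (y j) = \<beta> (y j)"
    proof -
      fix j assume "j \<le> Suc k"
      then show "\<gamma> (y j) = \<beta> (y j)"
      proof (cases "j = Suc k")
        case True then show ?thesis using gy by simp
      next
        case False
        then have "j \<le> k" using \<open>j \<le> Suc k\<close> by auto
        then have "y j \<in> P" unfolding P_def by auto
        then show ?thesis using gP IH \<open>j \<le> k\<close> by auto
      qed
    qed
    have isa: "is_assembly T \<sigma> \<gamma>"
      unfolding is_assembly_def
    proof
      fix t assume "t \<in> ran \<gamma>"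
      then obtain v where "\<gamma> v = Some t" unfolding ran_def by auto
      then have "\<alpha>max v = Some t \<or> \<beta> v = Some t" unfolding \<gamma>_def by (auto split: if_splits)
      then have "t \<in> ran \<alpha>max \<or> t \<in> ran \<beta>" by (auto intro: ranI)
      then show "t \<in> insert \<sigma> T" using ranmax ranb by blast
    qed
    have o_in: "(0,0) \<in> P" unfolding P_def using pos_0[of "(0,0)" m] by (auto simp: set_pos) (metis le0)
    have g00: "\<gamma> (0,0) = Some \<sigma>" using gP[OF o_in] a00 by simp
    let ?R = "bind_rel \<gamma>"
    have reach_m: "((0,0), positions (0,0) m ! j) \<in> ?R\<^sup>*" if "j \<le> length m" for j
    proof (rule path_reach[OF _ that], intro allI impI)
      fix i assume "i < j"
      then have il: "i < length m" using that by auto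
      have b: "binds \<alpha>max (positions (0,0) m ! i) (m ! i)" using pm il unfolding path_in_def by auto
      have s1: "positions (0,0) m ! i \<in> P" unfolding P_def using il by (auto simp: set_pos)
      have s2: "padd (positions (0,0) m ! i) (vec (m!i)) \<in> P" unfolding P_def
        using il pos_Suc[OF il, of "(0,0)"] by (auto simp: set_pos) (metis Suc_leI)
      show "binds \<gamma> (positions (0,0) m ! i) (m ! i)"
        by (rule binds_cong[OF gP[OF s1] gP[OF s2] b])
    qed
    have ox: "((0,0), x) \<in> ?R\<^sup>*" using reach_m[of "length m"] pos_last[of "(0,0)" m] dm by simp
    have reach_y: "(x, y j) \<in> ?R\<^sup>*" if "j \<le> Suc k" for j
      unfolding y_def
    proof (rule path_reach[OF _ ], intro allI impI)
      fix i assume "i < j"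
      then have il: "i < length p" "i \<le> k" using that kl by auto
      have g1: "\<gamma> (y i) = \<beta> (y i)" using gyj il by auto
      have g2: "\<gamma> (padd (y i) (vec (p!i))) = \<beta> (padd (y i) (vec (p!i)))"
        using ySuc[of i] gyj[of "Suc i"] il by auto
      have "binds \<gamma> (y i) (p ! i)" by (rule binds_cong[OF g1 g2 bbind[OF il(1)]])
      then show "binds \<gamma> (positions x p ! i) (p ! i)" unfolding y_def .
    next
      show "j \<le> length p" using that kl by auto
    qed
    have reach_all: "((0,0), v) \<in> ?R\<^sup>*" if "v \<in> dom \<gamma>" for v
    proof -
      have "v \<in> set (positions (0,0) m) \<or> (\<exists>j \<le> Suc k. v = y j)"
        using that domg unfolding P_def by (auto simp: le_Suc_eq)
      then show ?thesis
      proof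
        assume "v \<in> set (positions (0,0) m)"
        then obtain j where "j \<le> length m" "v = positions (0,0) m ! j" by (auto simp: set_pos)
        then show ?thesis using reach_m by auto
      next
        assume "\<exists>j \<le> Suc k. v = y j"
        then obtain j where "j \<le> Suc k" "v = y j" by auto
        then show ?thesis using ox reach_y rtrancl_trans by metis
      qed
    qed
    have symR: "sym (?R\<^sup>*)" using sym_bind_rel sym_rtrancl by blast
    have stab: "stable \<gamma>" unfolding stable_def
    proof (intro ballI)
      fix u v assume "u \<in> dom \<gamma>" "v \<in> dom \<gamma>"
      then have "(u, (0,0)) \<in> ?R\<^sup>*" "((0,0), v) \<in> ?R\<^sup>*"
        using reach_all symR unfolding sym_def by blast+
      then show "(u, v) \<in> ?R\<^sup>*" by (rule rtrancl_trans)
    qed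
    have prodg: "producible T \<sigma> \<gamma>" unfolding producible_def using isa stab g00 by auto
    have "?y \<in> dom \<gamma>" using domg by auto
    moreover then have "?y \<in> dom \<alpha>max" using maxdom[OF prodg] by auto
    ultimately have "\<alpha>max ?y = \<gamma> ?y"
      using assms(2) prodmax prodg unfolding confluent_def by blast
    then have "\<alpha>max ?y = \<beta> ?y" using gy by simp
    then show ?case using IH by (auto simp: le_Suc_eq)
  qed
  have all: "\<And>j. j \<le> length p \<Longrightarrow> \<alpha>max (y j) = \<beta> (y j)" using agree by blast
  show ?thesis unfolding path_in_def
  proof
    show "set (positions x p) \<subseteq> dom \<alpha>max"
    proof
      fix v assume "v \<in> set (positions x p)"
      then obtain j where "j \<le> length p" "v = y j" unfolding y_def by (auto simp: set_pos)
      then show "v \<in> dom \<alpha>max" using all ybdom by (simp add: domIff)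
    qed
    show "\<forall>i<length p. binds \<alpha>max (positions x p ! i) (p ! i)"
    proof (intro allI impI)
      fix i assume il: "i < length p"
      have g1: "\<alpha>max (y i) = \<beta> (y i)" using all il by auto
      have g2: "\<alpha>max (padd (y i) (vec (p!i))) = \<beta> (padd (y i) (vec (p!i)))"
        using ySuc[of i] all[of "Suc i"] il by auto
      have "binds \<alpha>max (y i) (p ! i)" by (rule binds_cong[OF g1 g2 bbind[OF il]])
      then show "binds \<alpha>max (positions x p ! i) (p ! i)" unfolding y_def .
    qed
  qed
qed

end
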